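(* Let $h\ge r$ be positive integers and let $0<\beta<1$ be a real. There exists a positive real $\alpha$ depending on $h,r,\beta$ such that the following holds. Let $G$ be any graph on $n$ vertices and let $p=p_r(G)$. For $0\le i\le h$ and $1\le j\le h$, let $\mathcal{A}_{i,j}$ denote the set of $i$-good sequences of length $j$ relative to $(\alpha,\beta,h,r)$ in $V(G)$, and let $\mathcal{B}_{i,j}=V(G)^j\setminus\mathcal{A}_{i,j}$. Then for each $0\le i\le h$, $1\le j\le h$ and $1\le\ell\le j$, \[\sum_{S\in\mathcal{B}_{i,j}}|N(S)|^\ell\le\beta\,n^{j+\ell}p^{j\ell}.\]
   Context: All graphs are finite and simple. For a positive integer $r$, $p_r(G)=t_{K_{1,r}}(G)^{1/r}=\frac1n\left(\frac1n\sum_{v\in V(G)}d(v)^r\right)^{1/r}$ where $n=|G|$. A sequence in a set $W$ is a finite sequence of elements of $W$ (repetitions allowed); its length $|S|$ counts multiplicity; $W^k$ denotes the set of sequences of length $k$ in $W$. For a sequence $S$ in $V(G)$, $N(S)$ is the set of vertices adjacent to every vertex of $S$. Goodness: fix reals $0<\alpha,\beta<1$ and positive integers $h,r$, and let $p=p_r(G)$. A sequence $T$ in $V(G)$ is $0$-good if $|N(T)|\ge\alpha p^{|T|}n$. For $1\le i\le h$, a sequence $S$ in $V(G)$ of length at most $h$ is $i$-good if $S$ is $0$-good and for each $|S|\le k\le h$, the number of $(i-1)$-good sequences in $N(S)^k$ is at least $(1-\beta)|N(S)|^k$. These are called $i$-good relative to $(\alpha,\beta,h,r)$. *)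

theory Defs
  imports Complex_Main
begin

text \<open>A finite simple graph: finite vertex set V, symmetric irreflexive edge relation E on V.
Vertices are natural numbers (every finite graph is isomorphic to one of these).\<close>
definition simple_graph :: "nat set \<Rightarrow> (nat \<Rightarrow> nat \<Rightarrow> bool) \<Rightarrow> bool" where
  "simple_graph V E \<longleftrightarrow> finite V \<and> (\<forall>u v. E u v \<longrightarrow> u \<in> V \<and> v \<in> V)
     \<and> (\<forall>u v. E u v \<longrightarrow> E v u) \<and> (\<forall>v. \<not> E v v)"

definition deg :: "nat set \<Rightarrow> (nat \<Rightarrow> nat \<Rightarrow> bool) \<Rightarrow> nat \<Rightarrow> nat" where
  "deg V E v = card {u \<in> V. E v u}"

definition pr :: "nat set \<Rightarrow> (nat \<Rightarrow> nat \<Rightarrow> bool) \<Rightarrow> nat \<Rightarrow> real" where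
  "pr V E r = (1 / real (card V)) *
      root r ((1 / real (card V)) * (\<Sum>v\<in>V. real (deg V E v) ^ r))"

definition nbhd :: "nat set \<Rightarrow> (nat \<Rightarrow> nat \<Rightarrow> bool) \<Rightarrow> nat list \<Rightarrow> nat set" where
  "nbhd V E S = {v \<in> V. \<forall>u \<in> set S. E u v}"

definition seqs :: "'a set \<Rightarrow> nat \<Rightarrow> 'a list set" where
  "seqs W k = {xs. set xs \<subseteq> W \<and> length xs = k}"

fun good :: "real \<Rightarrow> real \<Rightarrow> nat \<Rightarrow> nat \<Rightarrow> nat set \<Rightarrow> (nat \<Rightarrow> nat \<Rightarrow> bool) \<Rightarrow> nat \<Rightarrow> nat list \<Rightarrow> bool" where
  "good al be h r V E 0 T \<longleftrightarrow> set T \<subseteq> V \<and>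
      real (card (nbhd V E T)) \<ge> al * pr V E r ^ length T * real (card V)"
| "good al be h r V E (Suc i) S \<longleftrightarrow> length S \<le> h \<and> good al be h r V E 0 S \<and>
      (\<forall>k. length S \<le> k \<and> k \<le> h \<longrightarrow>
         real (card {T \<in> seqs (nbhd V E S) k. good al be h r V E i T})
           \<ge> (1 - be) * real (card (nbhd V E S)) ^ k)"

end

theory Submission
  imports Defs
begin

lemma seqs_finite: "finite W \<Longrightarrow> finite (seqs W k)"
  unfolding seqs_def by (rule finite_lists_length_eq)

lemma seqs_card: "finite W \<Longrightarrow> card (seqs W k) = card W ^ k"
  unfolding seqs_def by (rule card_lists_length_eq)

lemma nbhd_sub: "nbhd V E S \<subseteq> V"
  unfolding nbhd_def by auto

lemma seqs_mono: "A \<subseteq> B \<Longrightarrow> seqs A k \<subseteq> seqs B k"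
  unfolding seqs_def by auto

lemma seqs_swap:
  assumes "simple_graph V E" "S \<in> seqs V j" "T \<in> seqs V k"
  shows "T \<in> seqs (nbhd V E S) k \<longleftrightarrow> S \<in> seqs (nbhd V E T) j"
  using assms unfolding simple_graph_def seqs_def nbhd_def by blast

lemma card_filter_sum: "finite A \<Longrightarrow> card {x\<in>A. P x} = (\<Sum>x\<in>A. if P x then 1 else (0::nat))"
  by (simp add: sum.inter_filter[symmetric])

lemma double_count:
  assumes G: "simple_graph V E"
  shows "(\<Sum>S\<in>seqs V j. card {T \<in> seqs (nbhd V E S) k. \<not> good al be h r V E i T})
       = (\<Sum>T\<in>seqs V k - {T. good al be h r V E i T}. card (nbhd V E T) ^ j)"
proof -
  have fV: "finite V" using G unfolding simple_graph_def by auto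
  define B where "B = seqs V k - {T. good al be h r V E i T}"
  have fB: "finite B" unfolding B_def using seqs_finite[OF fV] by auto
  have 1: "card {T \<in> seqs (nbhd V E S) k. \<not> good al be h r V E i T}
      = (\<Sum>T\<in>B. if T \<in> seqs (nbhd V E S) k then 1 else (0::nat))" for S
  proof -
    have "{T \<in> seqs (nbhd V E S) k. \<not> good al be h r V E i T} = {T\<in>B. T \<in> seqs (nbhd V E S) k}"
      unfolding B_def using seqs_mono[OF nbhd_sub, of V E S k] by auto
    then show ?thesis using card_filter_sum[OF fB] by simp
  qed
  have 2: "(\<Sum>S\<in>seqs V j. if T \<in> seqs (nbhd V E S) k then 1 else (0::nat)) = card (nbhd V E T) ^ j"
    if T: "T \<in> B" for T
  proof -
    have TV: "T \<in> seqs V k" using T unfolding B_def by auto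
    have "(\<Sum>S\<in>seqs V j. if T \<in> seqs (nbhd V E S) k then 1 else (0::nat))
        = card {S \<in> seqs V j. T \<in> seqs (nbhd V E S) k}"
      using card_filter_sum[OF seqs_finite[OF fV]] by simp
    also have "{S \<in> seqs V j. T \<in> seqs (nbhd V E S) k} = seqs (nbhd V E T) j"
      using seqs_swap[OF G _ TV] seqs_mono[OF nbhd_sub, of V E T j] by blast
    also have "card \<dots> = card (nbhd V E T) ^ j"
      by (rule seqs_card) (meson fV finite_subset nbhd_sub)
    finally show ?thesis .
  qed
  have "(\<Sum>S\<in>seqs V j. card {T \<in> seqs (nbhd V E S) k. \<not> good al be h r V E i T})
      = (\<Sum>S\<in>seqs V j. \<Sum>T\<in>B. if T \<in> seqs (nbhd V E S) k then 1 else (0::nat))"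
    using 1 by simp
  also have "\<dots> = (\<Sum>T\<in>B. \<Sum>S\<in>seqs V j. if T \<in> seqs (nbhd V E S) k then 1 else (0::nat))"
    by (rule sum.swap)
  also have "\<dots> = (\<Sum>T\<in>B. card (nbhd V E T) ^ j)"
    using 2 by simp
  finally show ?thesis unfolding B_def .
qed

lemma pr_nonneg: "0 < r \<Longrightarrow> 0 \<le> pr V E r"
  unfolding pr_def by (simp add: sum_nonneg)

lemma pr_zero_nbhd:
  assumes G: "simple_graph V E" and r: "0 < r" and p: "pr V E r = 0"
    and S: "S \<in> seqs V j" and j: "1 \<le> j"
  shows "nbhd V E S = {}"
proof (rule ccontr)
  assume ne: "nbhd V E S \<noteq> {}"
  have fV: "finite V" using G unfolding simple_graph_def by auto
  have "S \<noteq> []" using S j unfolding seqs_def by auto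
  then obtain u where u: "u \<in> set S" using hd_in_set by blast
  have uV: "u \<in> V" using S u unfolding seqs_def by auto
  then have Vne: "card V > 0" using fV card_gt_0_iff by blast
  from ne obtain v where v: "v \<in> nbhd V E S" by auto
  have "v \<in> {w \<in> V. E u w}" using v u unfolding nbhd_def by auto
  moreover have "finite {w \<in> V. E u w}" using fV by simp
  ultimately have dpos: "deg V E u > 0" unfolding deg_def
    using card_gt_0_iff by blast
  have "root r ((1 / real (card V)) * (\<Sum>v\<in>V. real (deg V E v) ^ r)) = 0"
    using p Vne unfolding pr_def by simp
  then have "(\<Sum>v\<in>V. real (deg V E v) ^ r) = 0" using r Vne by simp
  then have "real (deg V E u) ^ r = 0"
    using sum_nonneg_eq_0_iff[OF fV] uV by (simp add: sum_nonneg_eq_0_iff[OF fV])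
  then show False using dpos by simp
qed

lemma split_pow:
  fixes x c :: real
  assumes "0 \<le> x" "0 < c" "l \<le> k"
  shows "x ^ l \<le> c ^ l + x ^ k / c ^ (k - l)"
proof (cases "x \<le> c")
  case True
  then have "x ^ l \<le> c ^ l" using assms by (simp add: power_mono)
  moreover have "0 \<le> x ^ k / c ^ (k - l)" using assms by simp
  ultimately show ?thesis by linarith
next
  case False
  then have "c ^ (k - l) \<le> x ^ (k - l)" using assms by (simp add: power_mono)
  then have "x ^ l * c ^ (k - l) \<le> x ^ l * x ^ (k - l)" using assms by (simp add: mult_left_mono)
  also have "\<dots> = x ^ k" using assms by (simp add: power_add[symmetric])
  finally have "x ^ l \<le> x ^ k / c ^ (k - l)" using assms by (simp add: field_simps)
  moreover have "0 \<le> c ^ l" using assms by simp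
  ultimately show ?thesis by linarith
qed


fun ee :: "real \<Rightarrow> nat \<Rightarrow> nat \<Rightarrow> real" where
  "ee b h 0 = b"
| "ee b h (Suc d) = ee b h d * b * (ee b h d / (3 * real h)) ^ h / (3 * real h)"

lemma ee_props:
  assumes b: "0 < b" "b < 1" and h: "1 \<le> h"
  shows "0 < ee b h d \<and> ee b h d \<le> b"
proof (induction d)
  case 0
  then show ?case using b by simp
next
  case (Suc d)
  define a where "a = ee b h d"
  have a: "0 < a" "a \<le> b" using Suc a_def by auto
  have h3: "1 \<le> 3 * real h" using h by simp
  have t: "(a / (3 * real h)) ^ h \<le> 1" using a b h3
    by (intro power_le_one) (auto simp: field_simps)
  have t0: "0 < (a / (3 * real h)) ^ h" using a h3 by simp
  have f: "b * (a / (3 * real h)) ^ h / (3 * real h) \<le> 1"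
  proof -
    have "b * (a / (3 * real h)) ^ h \<le> 1 * 1" using b t t0 by (intro mult_mono) auto
    also have "\<dots> \<le> 3 * real h" using h3 by simp
    finally show ?thesis using h3 by simp
  qed
  have e: "ee b h (Suc d) = a * (b * (a / (3 * real h)) ^ h / (3 * real h))"
    by (simp add: a_def)
  have "ee b h (Suc d) \<le> a * 1" unfolding e using a f by (intro mult_left_mono) auto
  moreover have "0 < ee b h (Suc d)" unfolding e using a b t0 h3 by simp
  ultimately show ?case using a by simp
qed

lemma ee_dec:
  assumes b: "0 < b" "b < 1" and h: "1 \<le> h"
  shows "ee b h (Suc d) \<le> ee b h d"
proof -
  define a where "a = ee b h d"
  have a: "0 < a" "a \<le> b" using ee_props[OF b h] a_def by auto
  have h3: "1 \<le> 3 * real h" using h by simp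
  have t: "(a / (3 * real h)) ^ h \<le> 1" using a b h3
    by (intro power_le_one) (auto simp: field_simps)
  have t0: "0 < (a / (3 * real h)) ^ h" using a h3 by simp
  have f: "b * (a / (3 * real h)) ^ h / (3 * real h) \<le> 1"
  proof -
    have "b * (a / (3 * real h)) ^ h \<le> 1 * 1" using b t t0 by (intro mult_mono) auto
    also have "\<dots> \<le> 3 * real h" using h3 by simp
    finally show ?thesis using h3 by simp
  qed
  have e: "ee b h (Suc d) = a * (b * (a / (3 * real h)) ^ h / (3 * real h))"
    by (simp add: a_def)
  show ?thesis unfolding e using a f mult_left_mono[OF f, of a] by (simp add: a_def)
qed

lemma ee_mono:
  assumes b: "0 < b" "b < 1" and h: "1 \<le> h" and dd: "d \<le> d'"
  shows "ee b h d' \<le> ee b h d"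
  using dd
proof (induction d' rule: dec_induct)
  case base
  then show ?case by simp
next
  case (step m)
  then show ?case using ee_dec[OF b h, of m] by linarith
qed

lemma ee_key:
  assumes b: "0 < b" "b < 1" and h: "1 \<le> h"
  shows "real h * (ee b h d / (3 * real h) + ee b h (Suc d) / (b * (ee b h d / (3 * real h)) ^ h))
         = 2 * ee b h d / 3"
proof -
  define a where "a = ee b h d"
  have a: "0 < a" using ee_props[OF b h] a_def by auto
  have h3: "1 \<le> 3 * real h" using h by simp
  have t0: "0 < (a / (3 * real h)) ^ h" using a h3 by simp
  have "ee b h (Suc d) / (b * (a / (3 * real h)) ^ h) = a / (3 * real h)"
    using b t0 h3 by (simp add: a_def)
  then show ?thesis using h3 unfolding a_def[symmetric] by (simp add: field_simps)
qed

lemma pow_swap: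
  fixes n p :: real
  shows "n ^ k * (n * p ^ k) ^ j = n ^ j * (n * p ^ j) ^ k"
  by (simp add: power_mult_distrib power_mult[symmetric] mult.commute mult.left_commute)


lemma card_split:
  assumes "finite A"
  shows "card {x\<in>A. P x} + card {x\<in>A. \<not> P x} = card A"
proof -
  have "A = {x\<in>A. P x} \<union> {x\<in>A. \<not> P x}" by auto
  then have "card A = card ({x\<in>A. P x} \<union> {x\<in>A. \<not> P x})" by simp
  also have "\<dots> = card {x\<in>A. P x} + card {x\<in>A. \<not> P x}"
    using assms by (intro card_Un_disjoint) auto
  finally show ?thesis by simp
qed

lemma main_bound:
  assumes G: "simple_graph V E" and r: "0 < r" and h: "1 \<le> h"
    and b: "0 < b" "b < 1" and p: "0 < pr V E r"
    and al: "al = ee b h h / 3" and ih: "i \<le> h"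
  shows "\<forall>j l. 1 \<le> l \<longrightarrow> l \<le> j \<longrightarrow> j \<le> h \<longrightarrow>
    (\<Sum>S\<in>seqs V j - {S. good al b h r V E i S}. real (card (nbhd V E S)) ^ l)
      \<le> ee b h (h - i) * real (card V) ^ j * (real (card V) * pr V E r ^ j) ^ l"
proof -
  have fV: "finite V" using G unfolding simple_graph_def by auto
  have nV: "card V > 0"
  proof (rule ccontr)
    assume "\<not> card V > 0"
    then have "card V = 0" by simp
    then have "pr V E r = 0" unfolding pr_def by simp
    then show False using p by simp
  qed
  define n where "n = real (card V)"
  have npos: "0 < n" using nV n_def by simp
  have alpos: "0 < al" "al \<le> 1" using ee_props[OF b h, of h] al b by auto
  have cardseqs: "real (card (seqs V j)) = n ^ j" for j
    using seqs_card[OF fV] n_def by simp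
  have finseqs: "finite (seqs V j)" for j using seqs_finite[OF fV] .
  show ?thesis using ih
  proof (induction i)
    case 0
    show ?case
    proof (intro allI impI)
      fix j l :: nat assume jl: "1 \<le> l" "l \<le> j" "j \<le> h"
      define q where "q = n * pr V E r ^ j"
      have qpos: "0 < q" using npos p q_def by simp
      define A where "A = seqs V j - {S. good al b h r V E 0 S}"
      have bnd: "real (card (nbhd V E S)) ^ l \<le> ee b h (h - 0) * q ^ l" if S: "S \<in> A" for S
      proof -
        have "set S \<subseteq> V" "length S = j" using S unfolding A_def seqs_def by auto
        then have x: "real (card (nbhd V E S)) < al * q" using S unfolding A_def q_def n_def
          by (auto simp: mult.commute mult.left_commute)
        then have "real (card (nbhd V E S)) ^ l \<le> (al * q) ^ l" by (intro power_mono) auto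
        also have "\<dots> = al ^ l * q ^ l" by (simp add: power_mult_distrib)
        also have "\<dots> \<le> al * q ^ l"
        proof -
          have "al ^ l \<le> al ^ 1" using alpos \<open>1 \<le> l\<close> by (intro power_decreasing) auto
          then show ?thesis using qpos by (intro mult_right_mono) auto
        qed
        also have "\<dots> \<le> ee b h (h - 0) * q ^ l" using al ee_props[OF b h, of h] qpos
          by (intro mult_right_mono) auto
        finally show ?thesis .
      qed
      have cA: "real (card A) \<le> n ^ j"
      proof -
        have "card A \<le> card (seqs V j)" unfolding A_def using finseqs
          by (intro card_mono) auto
        then show ?thesis using cardseqs[of j] by (metis of_nat_le_iff)
      qed
      have "(\<Sum>S\<in>A. real (card (nbhd V E S)) ^ l) \<le> real (card A) * (ee b h (h - 0) * q ^ l)"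
        using bnd by (rule sum_bounded_above)
      also have "\<dots> \<le> n ^ j * (ee b h (h - 0) * q ^ l)"
      proof (rule mult_right_mono)
        show "real (card A) \<le> n ^ j" using cA .
        show "0 \<le> ee b h (h - 0) * q ^ l" using ee_props[OF b h, of "h - 0"] qpos by simp
      qed
      also have "\<dots> = ee b h (h - 0) * n ^ j * q ^ l" by (simp add: algebra_simps)
      finally show "(\<Sum>S\<in>seqs V j - {S. good al b h r V E 0 S}. real (card (nbhd V E S)) ^ l)
        \<le> ee b h (h - 0) * real (card V) ^ j * (real (card V) * pr V E r ^ j) ^ l"
        unfolding A_def q_def n_def .
    qed
  next
    case (Suc i)
    then have IH0: "\<forall>j l. 1 \<le> l \<longrightarrow> l \<le> j \<longrightarrow> j \<le> h \<longrightarrow>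
      (\<Sum>S\<in>seqs V j - {S. good al b h r V E i S}. real (card (nbhd V E S)) ^ l)
      \<le> ee b h (h - i) * real (card V) ^ j * (real (card V) * pr V E r ^ j) ^ l" by simp
    show ?case
    proof (intro allI impI)
      fix j l :: nat assume jl: "1 \<le> l" "l \<le> j" "j \<le> h"
      define x where "x S = real (card (nbhd V E S))" for S
      have x0: "0 \<le> x S" for S unfolding x_def by simp
      define d where "d = h - Suc i"
      have hd: "h - i = Suc d" using Suc.prems d_def by simp
      define a where "a = ee b h d"
      define be where "be = ee b h (Suc d)"
      define \<gamma> where "\<gamma> = a / (3 * real h)"
      define q where "q = n * pr V E r ^ j"
      define c where "c = \<gamma> * q"
      have apos: "0 < a" "a \<le> b" using ee_props[OF b h, of d] a_def by auto
      have bepos: "0 < be" using ee_props[OF b h, of "Suc d"] be_def by auto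
      have h3: "1 \<le> 3 * real h" using h by simp
      have gpos: "0 < \<gamma>" "\<gamma> \<le> 1" using apos b h3 unfolding \<gamma>_def by (auto simp: field_simps)
      have qpos: "0 < q" using npos p q_def by simp
      have cpos: "0 < c" using gpos qpos c_def by simp
      have alpha_le: "al \<le> a / 3"
        using ee_mono[OF b h, of d h] d_def al a_def by simp
      have IH: "(\<Sum>T\<in>seqs V k - {T. good al b h r V E i T}. x T ^ j) \<le> be * n ^ j * q ^ k"
        if k: "j \<le> k" "k \<le> h" for k
      proof -
        have "(\<Sum>T\<in>seqs V k - {T. good al b h r V E i T}. x T ^ j)
           \<le> ee b h (h - i) * n ^ k * (n * pr V E r ^ k) ^ j"
          using IH0 jl k unfolding x_def n_def by simp
        also have "\<dots> = be * n ^ j * q ^ k" unfolding hd be_def q_def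
          using pow_swap[of n k "pr V E r" j] by (simp add: mult.assoc)
        finally show ?thesis .
      qed
      define C where "C k = {S. real (card {T \<in> seqs (nbhd V E S) k. good al b h r V E i T})
          < (1 - b) * x S ^ k}" for k
      define g0 where "g0 S = (if good al b h r V E 0 S then 0 else x S ^ l)" for S
      define gk where "gk k S = (if S \<in> C k then x S ^ l else 0)" for k S
      have g0nn: "0 \<le> g0 S" for S unfolding g0_def using x0 by simp
      have gknn: "0 \<le> gk k S" for k S unfolding gk_def using x0 by simp
      have pw: "x S ^ l \<le> g0 S + (\<Sum>k\<in>{j..h}. gk k S)"
        if S: "S \<in> seqs V j - {S. good al b h r V E (Suc i) S}" for S
      proof (cases "good al b h r V E 0 S")
        case False
        have "g0 S = x S ^ l" unfolding g0_def using False by (simp only: if_False)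
        moreover have "0 \<le> (\<Sum>k\<in>{j..h}. gk k S)" using gknn by (simp add: sum_nonneg)
        ultimately show ?thesis by linarith
      next
        case True
        have len: "length S = j" using S unfolding seqs_def by auto
        have "\<not> good al b h r V E (Suc i) S" using S by auto
        then obtain k where k: "j \<le> k" "k \<le> h" and
          "\<not> real (card {T \<in> seqs (nbhd V E S) k. good al b h r V E i T})
             \<ge> (1 - b) * real (card (nbhd V E S)) ^ k"
          using True len jl by auto
        then have "S \<in> C k" unfolding C_def x_def by auto
        then have "x S ^ l = gk k S" unfolding gk_def by simp
        also have "\<dots> \<le> (\<Sum>k\<in>{j..h}. gk k S)"
          using k gknn by (intro member_le_sum) auto
        finally show ?thesis using g0nn[of S] by linarith
      qed
      have s1: "(\<Sum>S\<in>seqs V j - {S. good al b h r V E (Suc i) S}. x S ^ l)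
          \<le> (\<Sum>S\<in>seqs V j. g0 S + (\<Sum>k\<in>{j..h}. gk k S))"
      proof -
        have "(\<Sum>S\<in>seqs V j - {S. good al b h r V E (Suc i) S}. x S ^ l)
          \<le> (\<Sum>S\<in>seqs V j - {S. good al b h r V E (Suc i) S}. g0 S + (\<Sum>k\<in>{j..h}. gk k S))"
          using pw by (rule sum_mono)
        also have "\<dots> \<le> (\<Sum>S\<in>seqs V j. g0 S + (\<Sum>k\<in>{j..h}. gk k S))"
        proof (rule sum_mono2)
          show "finite (seqs V j)" using finseqs .
          show "seqs V j - {S. good al b h r V E (Suc i) S} \<subseteq> seqs V j" by blast
          fix S
          show "0 \<le> g0 S + (\<Sum>k\<in>{j..h}. gk k S)"
            using g0nn[of S] gknn by (intro add_nonneg_nonneg sum_nonneg) auto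
        qed
        finally show ?thesis .
      qed
      have s2: "(\<Sum>S\<in>seqs V j. g0 S) \<le> n ^ j * (al * q ^ l)"
      proof -
        have "g0 S \<le> al * q ^ l" if S: "S \<in> seqs V j" for S
        proof (cases "good al b h r V E 0 S")
          case True
          then show ?thesis unfolding g0_def using alpos qpos by simp
        next
          case False
          have "set S \<subseteq> V" "length S = j" using S unfolding seqs_def by auto
          then have xs: "x S < al * q" using False unfolding q_def n_def x_def
            by (auto simp: mult.commute mult.left_commute)
          then have "x S ^ l \<le> (al * q) ^ l" using x0 by (intro power_mono) auto
          also have "\<dots> = al ^ l * q ^ l" by (simp add: power_mult_distrib)
          also have "\<dots> \<le> al * q ^ l"
          proof -
            have "al ^ l \<le> al ^ 1" using alpos \<open>1 \<le> l\<close> by (intro power_decreasing) auto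
            then show ?thesis using qpos by (intro mult_right_mono) auto
          qed
          moreover have "g0 S = x S ^ l" unfolding g0_def using False by (simp only: if_False)
          ultimately show ?thesis by linarith
        qed
        then have "(\<Sum>S\<in>seqs V j. g0 S) \<le> real (card (seqs V j)) * (al * q ^ l)"
          by (rule sum_bounded_above)
        then show ?thesis using cardseqs[of j] by simp
      qed
      have s3: "(\<Sum>S\<in>seqs V j. gk k S) \<le> n ^ j * q ^ l * (\<gamma> + be / (b * \<gamma> ^ h))"
        if k: "k \<in> {j..h}" for k
      proof -
        have kk: "j \<le> k" "k \<le> h" using k by auto
        define bad where "bad S = real (card {T \<in> seqs (nbhd V E S) k. \<not> good al b h r V E i T})" for S
        have cklpos: "0 < c ^ (k - l)" using cpos by simp
        have pw3: "gk k S \<le> c ^ l + bad S / (b * c ^ (k - l))" if S: "S \<in> seqs V j" for S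
        proof (cases "S \<in> C k")
          case True
          have fn: "finite (seqs (nbhd V E S) k)"
            by (rule seqs_finite) (meson fV finite_subset nbhd_sub)
          have "card {T \<in> seqs (nbhd V E S) k. good al b h r V E i T} + 
                card {T \<in> seqs (nbhd V E S) k. \<not> good al b h r V E i T} = card (nbhd V E S) ^ k"
            using card_split[OF fn] seqs_card[of "nbhd V E S" k] fV
            by (metis finite_subset nbhd_sub)
          then have "real (card {T \<in> seqs (nbhd V E S) k. good al b h r V E i T}) + bad S = x S ^ k"
            unfolding bad_def x_def by (simp only: of_nat_add[symmetric] of_nat_power[symmetric] of_nat_eq_iff)
          then have "b * x S ^ k < bad S" using True unfolding C_def by (auto simp: algebra_simps)
          then have "x S ^ k \<le> bad S / b" using b by (simp add: field_simps)
          then have "x S ^ k / c ^ (k - l) \<le> bad S / b / c ^ (k - l)"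
            using cklpos by (intro divide_right_mono) auto
          also have "\<dots> = bad S / (b * c ^ (k - l))" by simp
          finally have "x S ^ k / c ^ (k - l) \<le> bad S / (b * c ^ (k - l))" .
          moreover have "x S ^ l \<le> c ^ l + x S ^ k / c ^ (k - l)"
            using split_pow[OF x0 cpos] jl kk by simp
          ultimately show ?thesis unfolding gk_def using True by simp
        next
          case False
          have "0 \<le> bad S / (b * c ^ (k - l))" unfolding bad_def using b cklpos by simp
          then show ?thesis unfolding gk_def using False cpos by simp
        qed
        have sb: "(\<Sum>S\<in>seqs V j. bad S) \<le> be * n ^ j * q ^ k"
        proof -
          have "(\<Sum>S\<in>seqs V j. bad S) = real (\<Sum>S\<in>seqs V j. card {T \<in> seqs (nbhd V E S) k. \<not> good al b h r V E i T})"
            unfolding bad_def by simp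
          also have "\<dots> = real (\<Sum>T\<in>seqs V k - {T. good al b h r V E i T}. card (nbhd V E T) ^ j)"
            using double_count[OF G] by metis
          also have "\<dots> = (\<Sum>T\<in>seqs V k - {T. good al b h r V E i T}. x T ^ j)"
            unfolding x_def by simp
          also have "\<dots> \<le> be * n ^ j * q ^ k" using IH kk by simp
          finally show ?thesis .
        qed
        have "(\<Sum>S\<in>seqs V j. gk k S) \<le> (\<Sum>S\<in>seqs V j. c ^ l + bad S / (b * c ^ (k - l)))"
          using pw3 by (rule sum_mono)
        also have "\<dots> = n ^ j * c ^ l + (\<Sum>S\<in>seqs V j. bad S) / (b * c ^ (k - l))"
          by (simp add: sum.distrib sum_divide_distrib cardseqs)
        also have "\<dots> \<le> n ^ j * c ^ l + be * n ^ j * q ^ k / (b * c ^ (k - l))"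
          using sb b cklpos by (simp add: divide_right_mono)
        also have "\<dots> \<le> n ^ j * q ^ l * (\<gamma> + be / (b * \<gamma> ^ h))"
        proof -
          have e1: "n ^ j * c ^ l \<le> n ^ j * q ^ l * \<gamma>"
          proof -
            have "\<gamma> ^ l \<le> \<gamma> ^ 1" using gpos jl by (intro power_decreasing) auto
            then have "\<gamma> ^ l * (n ^ j * q ^ l) \<le> \<gamma> * (n ^ j * q ^ l)"
              using npos qpos by (intro mult_right_mono) auto
            then show ?thesis unfolding c_def by (simp add: algebra_simps)
          qed
          have qk: "q ^ k = q ^ l * q ^ (k - l)" using jl kk by (simp add: power_add[symmetric])
          have e2: "be * n ^ j * q ^ k / (b * c ^ (k - l)) = n ^ j * q ^ l * (be / (b * \<gamma> ^ (k - l)))"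
            unfolding qk c_def using qpos gpos b by (simp add: field_simps)
          have gh: "\<gamma> ^ h \<le> \<gamma> ^ (k - l)" using gpos kk by (intro power_decreasing) auto
          have "be / (b * \<gamma> ^ (k - l)) \<le> be / (b * \<gamma> ^ h)"
            using gh gpos b bepos by (intro divide_left_mono mult_left_mono mult_pos_pos) auto
          then have e3: "n ^ j * q ^ l * (be / (b * \<gamma> ^ (k - l))) \<le> n ^ j * q ^ l * (be / (b * \<gamma> ^ h))"
            using npos qpos by (intro mult_left_mono) auto
          show ?thesis using e1 e2 e3 by (simp add: algebra_simps)
        qed
        finally show ?thesis .
      qed
      have "(\<Sum>S\<in>seqs V j - {S. good al b h r V E (Suc i) S}. x S ^ l)
          \<le> (\<Sum>S\<in>seqs V j. g0 S) + (\<Sum>k\<in>{j..h}. \<Sum>S\<in>seqs V j. gk k S)"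
        using s1 by (simp add: sum.distrib sum.swap[of _ "seqs V j"])
      also have "\<dots> \<le> n ^ j * (al * q ^ l) + real (card {j..h}) * (n ^ j * q ^ l * (\<gamma> + be / (b * \<gamma> ^ h)))"
        using s2 s3 by (intro add_mono sum_bounded_above) auto
      also have "\<dots> \<le> n ^ j * (al * q ^ l) + real h * (n ^ j * q ^ l * (\<gamma> + be / (b * \<gamma> ^ h)))"
      proof -
        have "real (card {j..h}) \<le> real h" using jl by simp
        moreover have "0 \<le> n ^ j * q ^ l * (\<gamma> + be / (b * \<gamma> ^ h))"
          using npos qpos gpos bepos b by simp
        ultimately show ?thesis by (simp add: mult_right_mono)
      qed
      also have "\<dots> = n ^ j * q ^ l * (al + real h * (\<gamma> + be / (b * \<gamma> ^ h)))"
        by (simp add: algebra_simps)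
      also have "\<dots> = n ^ j * q ^ l * (al + 2 * a / 3)"
        using ee_key[OF b h, of d] unfolding \<gamma>_def be_def a_def by simp
      also have "\<dots> \<le> n ^ j * q ^ l * a"
        using alpha_le npos qpos by (intro mult_left_mono) auto
      also have "\<dots> = ee b h (h - Suc i) * n ^ j * q ^ l"
        unfolding a_def d_def by simp
      finally show "(\<Sum>S\<in>seqs V j - {S. good al b h r V E (Suc i) S}. real (card (nbhd V E S)) ^ l)
        \<le> ee b h (h - Suc i) * real (card V) ^ j * (real (card V) * pr V E r ^ j) ^ l"
        unfolding x_def q_def n_def .
    qed
  qed
qed

theorem lemma3p4:
  fixes h r :: nat and \<beta> :: real
  assumes "0 < r" "r \<le> h" "0 < \<beta>" "\<beta> < 1"
  shows "\<exists>\<alpha>::real. 0 < \<alpha> \<and> \<alpha> < 1 \<and>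
    (\<forall>V E. simple_graph V E \<longrightarrow>
      (\<forall>i j l. i \<le> h \<longrightarrow> 1 \<le> j \<longrightarrow> j \<le> h \<longrightarrow> 1 \<le> l \<longrightarrow> l \<le> j \<longrightarrow>
        (\<Sum>S \<in> seqs V j - {S. good \<alpha> \<beta> h r V E i S}. real (card (nbhd V E S)) ^ l)
          \<le> \<beta> * real (card V) ^ (j + l) * pr V E r ^ (j * l)))"
proof -
  have h: "1 \<le> h" using assms by simp
  have b: "0 < \<beta>" "\<beta> < 1" using assms by auto
  define al where "al = ee \<beta> h h / 3"
  have alp: "0 < al" "al < 1" using ee_props[OF b h, of h] b unfolding al_def by auto
  show ?thesis
  proof (intro exI conjI allI impI)
    show "0 < al" "al < 1" using alp by auto
    fix V E i j l
    assume G: "simple_graph V E" and ijl: "i \<le> h" "1 \<le> j" "j \<le> h" "1 \<le> l" "l \<le> j"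
    show "(\<Sum>S \<in> seqs V j - {S. good al \<beta> h r V E i S}. real (card (nbhd V E S)) ^ l)
          \<le> \<beta> * real (card V) ^ (j + l) * pr V E r ^ (j * l)"
    proof (cases "pr V E r = 0")
      case True
      have "(\<Sum>S \<in> seqs V j - {S. good al \<beta> h r V E i S}. real (card (nbhd V E S)) ^ l) = 0"
      proof (rule sum.neutral, rule ballI)
        fix S assume "S \<in> seqs V j - {S. good al \<beta> h r V E i S}"
        then have "nbhd V E S = {}" using pr_zero_nbhd[OF G assms(1) True, of S j] ijl by auto
        then show "real (card (nbhd V E S)) ^ l = 0" using ijl by simp
      qed
      moreover have z: "pr V E r ^ (j * l) = 0" unfolding True using ijl by (intro zero_power) simp
      have "\<beta> * real (card V) ^ (j + l) * pr V E r ^ (j * l) = 0"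
        by (simp only: z mult_zero_right)
      ultimately show ?thesis by linarith
    next
      case False
      then have p: "0 < pr V E r" using pr_nonneg[OF assms(1), of V E] by linarith
      have "(\<Sum>S \<in> seqs V j - {S. good al \<beta> h r V E i S}. real (card (nbhd V E S)) ^ l)
          \<le> ee \<beta> h (h - i) * real (card V) ^ j * (real (card V) * pr V E r ^ j) ^ l"
        using main_bound[OF G assms(1) h b p al_def ijl(1)] ijl by blast
      also have "\<dots> \<le> \<beta> * real (card V) ^ j * (real (card V) * pr V E r ^ j) ^ l"
        using ee_props[OF b h, of "h - i"] p by (intro mult_right_mono) auto
      also have "\<dots> = \<beta> * real (card V) ^ (j + l) * pr V E r ^ (j * l)"
        by (simp add: power_add power_mult_distrib power_mult[symmetric] mult.commute mult.left_commute)
      finally show ?thesis .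
    qed
  qed
qed

end
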